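(* Let $X$ be a Fr\'echet space with a translation-invariant metric $d$ (i.e. $d(u,v)=d(u+w,v+w)$), let $\mathfrak F\subseteq\mathfrak S$, and let $\pi:X\to X$ be a continuous linear projection onto a finite-dimensional subspace $W=\pi(X)$. For $v\in X$ and $\varepsilon>0$ put $B^{\pi,v}(\varepsilon)=\{v+w:w\in W,\ d(0,w)\le\varepsilon\}$. Suppose: (i) $\mathbb D(\mathfrak F)$ is approximately controllable on $X$, i.e. $\overline{A_{\mathbb D(\mathfrak F)}(u,t)}=X$ for all $u\in X$, $t>0$; (ii) for every $v\in X$ and $\varepsilon,\varepsilon',t>0$ there exist $\tilde u\in X$, $\Phi^1,\dots,\Phi^k\in\mathfrak F$, times $s_1,\dots,s_k>0$ with $\sum_js_j\le t$, and continuous maps $g_j:B^{\pi,v}(\varepsilon)\to\mathcal P(\Phi^j)$ such that $\sup_{\tilde v\in B^{\pi,v}(\varepsilon)}d\big(\Phi^{k,g_k(\tilde v)}_{s_k}\cdots\Phi^{1,g_1(\tilde v)}_{s_1}\tilde u,\ \tilde v\big)<\varepsilon'$. Then for all $u,v\in X$ and $t,\varepsilon>0$ there exist $\Psi^1,\dots,\Psi^n\in\mathbb D(\mathfrak F)$ and $t_1,\dots,t_n>0$ with $t_1+\dots+t_n=t$ such that $\pi(\Psi^n_{t_n}\cdots\Psi^1_{t_1}u)=\pi(v)$ and $d(\Psi^n_{t_n}\cdots\Psi^1_{t_1}u,v)<\varepsilon$.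
   Context: $\dagger\notin X$ is an extra (explosive) point and $(Y,d_Y)$ an auxiliary metric space. For nonempty $Z\subseteq Y$, a one-parameter family of continuous local semigroups on $X$ parametrized by $Z$ is a map $(t,u,p)\mapsto\Phi^p_tu:[0,\infty)\times X\times Z\to X\cup\{\dagger\}$ such that for every $u\in X$, $p\in Z$ there is $T_{u,p}>0$ with: (i) $\Phi^p_tu\in X$ for $t<T_{u,p}$ and $=\dagger$ for $t\ge T_{u,p}$; (ii) $\Phi^p_0u=u$ and for $s,t\ge0$ with $s+t<T_{u,p}$, $t<T_{\Phi^p_su,p}$ and $\Phi^p_{t+s}u=\Phi^p_t\Phi^p_su$; (iii) for every $t<T_{u,p}$, $\varepsilon>0$ there is $\delta>0$ such that $|t-t'|+d(u,u')+d_Y(p,p')<\delta$ implies $t'<T_{u',p'}$ and $d(\Phi^p_tu,\Phi^{p'}_{t'}u')<\varepsilon$. $\mathfrak S$ is the set of all such families, $\mathcal P(\Phi)$ the parameter set of $\Phi$, and for $\mathfrak F\subseteq\mathfrak S$, $\mathbb D(\mathfrak F)=\{\Phi^p:\Phi\in\mathfrak F,\ p\in\mathcal P(\Phi)\}$, where $\Phi^p$ is the continuous local semigroup $(t,u)\mapsto\Phi^p_tu$. Compositions are only considered when all partial compositions lie in $X$. For a set $\mathcal F$ of continuous local semigroups, $A_{\mathcal F}(u,t)=\{\Phi^n_{t_n}\cdots\Phi^1_{t_1}u:\Phi^j\in\mathcal F,t_j>0,\sum t_j=t\}$. *)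

theory Defs
  imports "HOL-Analysis.Analysis" "HOL-Library.Extended_Real"
begin

text \<open>The explosive point is modelled by None; a state of X is Some u.
  A one-parameter family of continuous local semigroups is a pair (Phi, Z):
  Phi t u p is the value at time t, starting point u, parameter p (only
  t \<ge> 0 and p \<in> Z matter), and Z is the nonempty parameter set.\<close>

type_synonym ('a, 'p) family = "(real \<Rightarrow> 'a \<Rightarrow> 'p \<Rightarrow> 'a option) \<times> 'p set"
type_synonym 'a lsg = "real \<Rightarrow> 'a \<Rightarrow> 'a option"

definition frechet_space :: "'a::{real_vector,complete_space} itself \<Rightarrow> bool" where
  "frechet_space _ \<longleftrightarrow>
     (\<forall>u v w :: 'a. dist u v = dist (u + w) (v + w)) \<and>
     continuous_on UNIV (\<lambda>q::'a \<times> 'a. fst q + snd q) \<and>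
     continuous_on UNIV (\<lambda>q::real \<times> 'a. fst q *\<^sub>R snd q) \<and>
     (\<forall>U::'a set. open U \<and> 0 \<in> U \<longrightarrow> (\<exists>V. open V \<and> convex V \<and> 0 \<in> V \<and> V \<subseteq> U))"

definition is_family :: "('a::metric_space, 'p::metric_space) family \<Rightarrow> bool" where
  "is_family F \<longleftrightarrow> (case F of (Phi, Z) \<Rightarrow>
     Z \<noteq> {} \<and>
     (\<forall>u. \<forall>p\<in>Z.
        (\<exists>T::ereal. T > 0 \<and> (\<forall>t\<ge>0. Phi t u p \<noteq> None \<longleftrightarrow> ereal t < T)) \<and>
        Phi 0 u p = Some u \<and>
        (\<forall>s\<ge>0. \<forall>t\<ge>0. \<forall>w. Phi (t + s) u p = Some w \<longrightarrow>
             (\<exists>y. Phi s u p = Some y \<and> Phi t y p = Some w)) \<and>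
        (\<forall>t\<ge>0. \<forall>w. Phi t u p = Some w \<longrightarrow>
           (\<forall>e>0. \<exists>\<delta>>0. \<forall>t'\<ge>0. \<forall>u'. \<forall>p'\<in>Z.
              \<bar>t - t'\<bar> + dist u u' + dist p p' < \<delta> \<longrightarrow>
              (\<exists>w'. Phi t' u' p' = Some w' \<and> dist w w' < e)))))"

definition DD :: "('a, 'p) family set \<Rightarrow> 'a lsg set" where
  "DD FF = {(\<lambda>t u. Phi t u p) | Phi Z p. (Phi, Z) \<in> FF \<and> p \<in> Z}"

text \<open>Composition: the list [(S1,t1),...,(Sn,tn)] applied to u gives
  Sn_tn ... S1_t1 u, which is None as soon as some partial composition leaves X.\<close>
fun comp_lsg :: "('a lsg \<times> real) list \<Rightarrow> 'a \<Rightarrow> 'a option" where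
  "comp_lsg [] u = Some u"
| "comp_lsg ((S, t) # xs) u = (case S t u of None \<Rightarrow> None | Some w \<Rightarrow> comp_lsg xs w)"

definition attainable :: "'a lsg set \<Rightarrow> 'a \<Rightarrow> real \<Rightarrow> 'a set" where
  "attainable F u t = {w. \<exists>xs. xs \<noteq> [] \<and> (\<forall>(S, s) \<in> set xs. S \<in> F \<and> s > 0) \<and>
       sum_list (map snd xs) = t \<and> comp_lsg xs u = Some w}"

definition Bpi :: "('a::{real_vector,metric_space} \<Rightarrow> 'a) \<Rightarrow> 'a \<Rightarrow> real \<Rightarrow> 'a set" where
  "Bpi \<pi> v e = {v + w | w. w \<in> range \<pi> \<and> dist 0 w \<le> e}"

end

theory Submission
  imports Defs "HOL-Homology.Homology"
begin
definition Ev :: "nat \<Rightarrow> (nat\<Rightarrow>real) set" where "Ev m = {x. \<forall>i\<ge>m. x i = 0}"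
definition nrm :: "nat \<Rightarrow> (nat\<Rightarrow>real) \<Rightarrow> real" where "nrm m x = sqrt (\<Sum>i<m. (x i)^2)"

lemma nrm_nonneg: "nrm m x \<ge> 0" by (simp add: nrm_def sum_nonneg)

lemma nrm_scale: "nrm m (\<lambda>i. c * x i) = \<bar>c\<bar> * nrm m x"
proof -
  have "(\<Sum>i<m. (c * x i)^2) = c^2 * (\<Sum>i<m. (x i)^2)"
    by (simp add: power_mult_distrib sum_distrib_left)
  then show ?thesis by (simp add: nrm_def real_sqrt_mult)
qed

lemma nrm_zero: "x \<in> Ev m \<Longrightarrow> nrm m x = 0 \<Longrightarrow> x = (\<lambda>i. 0)"
proof -
  assume x: "x \<in> Ev m" and n: "nrm m x = 0"
  have "(\<Sum>i<m. (x i)^2) = 0" using n by (simp add: nrm_def)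
  then have "\<forall>i\<in>{..<m}. (x i)^2 = 0" by (subst (asm) sum_nonneg_eq_0_iff) auto
  show "x = (\<lambda>i. 0)"
  proof
    fix i show "x i = 0"
    proof (cases "i < m")
      case True then show ?thesis using \<open>\<forall>i\<in>{..<m}. (x i)^2 = 0\<close> by simp
    next
      case False then show ?thesis using x by (simp add: Ev_def)
    qed
  qed
qed

lemma cont_nrm [continuous_intros]:
  assumes "continuous_on S f" shows "continuous_on S (\<lambda>x. nrm m (f x))"
proof -
  have c: "continuous_on S (\<lambda>x. f x i)" for i using continuous_on_product_then_coordinatewise[OF assms] .
  show ?thesis unfolding nrm_def by (intro continuous_on_real_sqrt continuous_on_sum continuous_on_power c)
qed

lemma sphere_nsphere:
  assumes "0 < m"
  shows "nsphere (m-1) = top_of_set {x\<in>Ev m. nrm m x = 1}"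
proof -
  have "{x. (\<Sum>i\<le>m-1. x i ^ 2) = 1 \<and> (\<forall>i>m-1. x i = 0)} = {x\<in>Ev m. nrm m x = 1}"
  proof -
    have a: "{..m-1} = {..<m}" using assms by auto
    have b: "(\<forall>i>m-1. x i = 0) = (\<forall>i\<ge>m. x i = (0::real))" for x :: "nat\<Rightarrow>real" using assms
      by (metis Suc_diff_1 Suc_le_eq)
    show ?thesis using a b by (auto simp: Ev_def nrm_def)
  qed
  then show ?thesis by (simp add: nsphere euclidean_product_topology)
qed

lemma not_contractible_sphere: "0 < m \<Longrightarrow> \<not> contractible {x\<in>Ev m. nrm m x = 1}"
  using non_contractible_space_nsphere[of "m-1"] sphere_nsphere by force

lemma zero_lemma:
  assumes m: "0 < m"
    and contG: "continuous_on {x\<in>Ev m. nrm m x \<le> 1} G"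
    and GE: "G ` {x\<in>Ev m. nrm m x \<le> 1} \<subseteq> Ev m"
    and close: "\<And>x. x \<in> Ev m \<Longrightarrow> nrm m x = 1 \<Longrightarrow> nrm m (\<lambda>i. G x i - x i) < 1"
  shows "\<exists>x\<in>{x\<in>Ev m. nrm m x \<le> 1}. G x = (\<lambda>i. 0)"
proof (rule ccontr)
  assume nz: "\<not> ?thesis"
  define D where "D = {x\<in>Ev m. nrm m x \<le> 1}"
  define S where "S = {x\<in>Ev m. nrm m x = 1}"
  define \<nu> where "\<nu> = (\<lambda>y::nat\<Rightarrow>real. \<lambda>i. y i / nrm m y)"
  have GD: "x \<in> D \<Longrightarrow> G x \<in> Ev m \<and> nrm m (G x) > 0" for x
    using nz GE nrm_zero[of "G x" m] nrm_nonneg[of m "G x"] unfolding D_def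
    by (metis (no_types, lifting) image_subset_iff less_eq_real_def)
  have \<nu>S: "y \<in> Ev m \<Longrightarrow> nrm m y > 0 \<Longrightarrow> \<nu> y \<in> S" for y
  proof -
    assume y: "y \<in> Ev m" "nrm m y > 0"
    have "\<nu> y = (\<lambda>i. (1 / nrm m y) * y i)" by (simp add: \<nu>_def)
    then have "nrm m (\<nu> y) = nrm m (\<lambda>i. (1 / nrm m y) * y i)" by simp
    also have "\<dots> = 1" using y nrm_scale[of m "1 / nrm m y" y] by simp
    finally show ?thesis using y by (simp add: S_def Ev_def \<nu>_def)
  qed
  have \<nu>id: "x \<in> S \<Longrightarrow> \<nu> x = x" for x by (simp add: S_def \<nu>_def)
  have cont\<nu>: "continuous_on A f \<Longrightarrow> (\<And>z. z \<in> A \<Longrightarrow> nrm m (f z) \<noteq> 0) \<Longrightarrow> continuous_on A (\<lambda>z. \<nu> (f z))" for A and f :: "'b::topological_space \<Rightarrow> nat \<Rightarrow> real"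
  proof -
    assume cf: "continuous_on A f" and nz: "\<And>z. z \<in> A \<Longrightarrow> nrm m (f z) \<noteq> 0"
    have c: "continuous_on A (\<lambda>x. f x i)" for i using continuous_on_product_then_coordinatewise[OF cf] .
    show ?thesis unfolding \<nu>_def
      by (rule continuous_on_coordinatewise_then_product, rule continuous_on_divide[OF c cont_nrm[OF cf]]) (use nz in auto)
  qed
  define h1 where "h1 = (\<lambda>(s::real, x). \<nu> (\<lambda>i. x i + s * (G x i - x i)))"
  define h2 where "h2 = (\<lambda>(s::real, x). \<nu> (G (\<lambda>i. (1 - s) * x i)))"
  have hw: "homotopic_with (\<lambda>x. True) X Y p q \<longleftrightarrow> (\<exists>h. continuous_map (prod_topology (top_of_set {0..1::real}) X) Y h \<and>
     (\<forall>x\<in>topspace X. h(0,x) = p x) \<and> (\<forall>x\<in>topspace X. h(1,x) = q x))" for X Y p q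
    by (subst homotopic_with) auto
  have SD: "S \<subseteq> D" by (auto simp: S_def D_def)
  have h1nz: "nrm m (\<lambda>i. x i + s * (G x i - x i)) > 0" if "s \<in> {0..1}" "x \<in> S" for s x
  proof (rule ccontr)
    assume "\<not> ?thesis"
    then have "nrm m (\<lambda>i. x i + s * (G x i - x i)) = 0" using nrm_nonneg[of m "\<lambda>i. x i + s * (G x i - x i)"] by linarith
    moreover have "(\<lambda>i. x i + s * (G x i - x i)) \<in> Ev m"
      using that GD[of x] SD by (auto simp: Ev_def S_def)
    ultimately have z: "(\<lambda>i. x i + s * (G x i - x i)) = (\<lambda>i. 0)" by (rule nrm_zero[rotated])
    have "x = (\<lambda>i. (- s) * (G x i - x i))"
    proof
      fix i show "x i = - s * (G x i - x i)" using fun_cong[OF z, of i] by simp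
    qed
    then have "nrm m x = s * nrm m (\<lambda>i. G x i - x i)"
      using that by (metis abs_minus_cancel abs_of_nonneg atLeastAtMost_iff nrm_scale)
    also have "\<dots> < 1"
    proof -
      have "nrm m (\<lambda>i. G x i - x i) < 1" using close that by (auto simp: S_def)
      then show ?thesis using that nrm_nonneg[of m]
        by (smt (verit, best) atLeastAtMost_iff mult_left_le_one_le)
    qed
    finally show False using that by (simp add: S_def)
  qed
  have scD: "(\<lambda>i. (1 - s) * x i) \<in> D" if "s \<in> {0..1}" "x \<in> S" for s x
    using that by (auto simp: S_def D_def Ev_def nrm_scale)
  have "homotopic_with_canon (\<lambda>x. True) S S id (\<lambda>x. \<nu> (G x))"
    unfolding hw
  proof (intro exI conjI)
    show "continuous_map (prod_topology (top_of_set {0..1}) (top_of_set S)) (top_of_set S) h1"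
    proof -
      have "continuous_on ({0..1} \<times> S) h1"
        unfolding h1_def case_prod_unfold
      proof (rule cont\<nu>)
        show "continuous_on ({0..1} \<times> S) (\<lambda>p. \<lambda>i. snd p i + fst p * (G (snd p) i - snd p i))"
          apply (intro continuous_on_coordinatewise_then_product continuous_intros)
          apply (rule continuous_on_product_then_coordinatewise)
            apply (intro continuous_intros)
          apply (rule continuous_on_product_then_coordinatewise)
          apply (rule continuous_on_compose2[OF contG])
            apply (intro continuous_intros)
          using SD apply (auto simp: D_def)
          apply (rule continuous_on_product_then_coordinatewise)
            apply (intro continuous_intros)
          done
      qed (clarsimp, metis atLeastAtMost_iff h1nz less_irrefl)
      moreover have "h1 ` ({0..1} \<times> S) \<subseteq> S"
        using h1nz \<nu>S GD SD by (auto simp: h1_def Ev_def S_def)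
      ultimately show ?thesis by (simp add: continuous_map_in_subtopology image_subset_iff_funcset)
    qed
  qed (auto simp: h1_def \<nu>id)
  moreover have "homotopic_with_canon (\<lambda>x. True) S S (\<lambda>x. \<nu> (G x)) (\<lambda>x. \<nu> (G (\<lambda>i. 0)))"
    unfolding hw
  proof (intro exI conjI)
    show "continuous_map (prod_topology (top_of_set {0..1}) (top_of_set S)) (top_of_set S) h2"
    proof -
      have "continuous_on ({0..1} \<times> S) h2"
        unfolding h2_def case_prod_unfold
      proof (rule cont\<nu>)
        show "continuous_on ({0..1} \<times> S) (\<lambda>p. G (\<lambda>i. (1 - fst p) * snd p i))"
          apply (rule continuous_on_compose2[OF contG])
          apply (intro continuous_on_coordinatewise_then_product continuous_intros)
          apply (rule continuous_on_product_then_coordinatewise)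
            apply (intro continuous_intros)
          using scD by (auto simp: D_def)
      qed (clarsimp, metis GD scD atLeastAtMost_iff less_irrefl)
      moreover have "h2 ` ({0..1} \<times> S) \<subseteq> S"
        using \<nu>S GD scD by (auto simp: h2_def)
      ultimately show ?thesis by (simp add: continuous_map_in_subtopology image_subset_iff_funcset)
    qed
  qed (auto simp: h2_def)
  ultimately have "homotopic_with_canon (\<lambda>x. True) S S id (\<lambda>x. \<nu> (G (\<lambda>i. 0)))"
    by (rule homotopic_with_trans)
  then have "contractible_space (top_of_set S)" unfolding contractible_space_def by blast
  then show False using not_contractible_sphere[OF m] by (simp add: S_def)
qed

lemma coord_le_nrm: "i < m \<Longrightarrow> \<bar>x i\<bar> \<le> nrm m x"
proof -
  assume i: "i < m"
  have "(x i)^2 \<le> (\<Sum>j<m. (x j)^2)"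
    using i by (intro member_le_sum) auto
  then have "sqrt ((x i)^2) \<le> sqrt (\<Sum>j<m. (x j)^2)" by (rule real_sqrt_le_mono)
  then show ?thesis by (simp add: nrm_def)
qed

lemma closed_Ev: "closed (Ev m)"
proof -
  have "Ev m = (\<Inter>i\<in>{m..}. {x. x i = 0})" by (auto simp: Ev_def)
  moreover have "closed {x::nat\<Rightarrow>real. x i = 0}" for i
    using closed_Collect_eq[of "\<lambda>x::nat\<Rightarrow>real. x i" "\<lambda>x. 0"] by simp
  ultimately show ?thesis by auto
qed

lemma compact_nrm_le: "compact {x\<in>Ev m. nrm m x \<le> a}"
proof -
  define K where "K = PiE UNIV (\<lambda>i. if i < m then {-a..a} else {0::real})"
  have "compactin (product_topology (\<lambda>i. euclidean) UNIV) K"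
    unfolding K_def compactin_PiE by auto
  then have cK: "compact K" by (simp add: euclidean_product_topology)
  have cl: "closed {x\<in>Ev m. nrm m x \<le> a}"
  proof -
    have "closed {x::nat\<Rightarrow>real. nrm m x \<le> a}"
      by (intro closed_Collect_le continuous_intros) auto
    then show ?thesis using closed_Ev by (simp add: Collect_conj_eq closed_Int)
  qed
  have inK: "x \<in> K" if x: "x \<in> Ev m" "nrm m x \<le> a" for x
    unfolding K_def PiE_UNIV_domain Pi_iff
  proof (intro ballI)
    fix i
    show "x i \<in> (if i < m then {-a..a} else {0})"
    proof (cases "i < m")
      case True
      then have "\<bar>x i\<bar> \<le> a" using coord_le_nrm[OF True, of x] x(2) by linarith
      then show ?thesis using True by (simp add: abs_le_iff)
    next
      case False then show ?thesis using x(1) by (simp add: Ev_def)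
    qed
  qed
  have "{x\<in>Ev m. nrm m x \<le> a} = K \<inter> {x\<in>Ev m. nrm m x \<le> a}"
    using inK by blast
  then show ?thesis using compact_Int_closed[OF cK cl] by simp
qed

lemma compact_nrm_eq: "compact {x\<in>Ev m. nrm m x = a}"
proof -
  have cl: "closed {x\<in>Ev m. nrm m x = a}"
  proof -
    have "closed {x::nat\<Rightarrow>real. nrm m x = a}"
      by (intro closed_Collect_eq continuous_intros) auto
    then show ?thesis using closed_Ev by (simp add: Collect_conj_eq closed_Int)
  qed
  have "{x\<in>Ev m. nrm m x = a} = {x\<in>Ev m. nrm m x \<le> a} \<inter> {x\<in>Ev m. nrm m x = a}" by auto
  then show ?thesis using compact_Int_closed[OF compact_nrm_le[of m a] cl] by simp
qed

definition Lm :: "nat \<Rightarrow> (nat \<Rightarrow> 'a::real_vector) \<Rightarrow> (nat \<Rightarrow> real) \<Rightarrow> 'a" where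
  "Lm m b x = (\<Sum>i<m. x i *\<^sub>R b i)"
lemma Lm_diff: "Lm m b (\<lambda>i. x i - y i) = Lm m b x - Lm m b y"
  by (simp add: Lm_def scaleR_diff_left sum_subtractf)

lemma Lm_add: "Lm m b (\<lambda>i. x i + y i) = Lm m b x + Lm m b y"
  by (simp add: Lm_def scaleR_add_left sum.distrib)

lemma Lm_scale: "Lm m b (\<lambda>i. c * x i) = c *\<^sub>R Lm m b x"
  by (simp add: Lm_def scaleR_sum_right)

lemma Lm_zero: "Lm m b (\<lambda>i. 0) = 0"
  by (simp add: Lm_def)


context
  assumes fr: "frechet_space TYPE('a::{real_vector,complete_space})"
begin

lemma tr: "dist (u::'a) v = dist (u + w) (v + w)"
  using fr by (simp add: frechet_space_def)

lemma dist0: "dist (u::'a) v = dist 0 (v - u)"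
  using tr[of u v "- u"] by simp

lemma dist0_add: "dist 0 ((a::'a) + b) \<le> dist 0 a + dist 0 b"
proof -
  have "dist 0 (a + b) \<le> dist 0 a + dist a (a + b)" by (rule dist_triangle)
  also have "dist a (a + b) = dist 0 b" using dist0[of a "a+b"] by simp
  finally show ?thesis .
qed

lemma dist0_minus: "dist 0 (- (a::'a)) = dist 0 a"
  using dist0[of "-a" 0] by (simp add: dist_commute)

lemma dist0_sum: "dist 0 (\<Sum>i\<in>I. f i :: 'a) \<le> (\<Sum>i\<in>I. dist 0 (f i))"
proof (induction I rule: infinite_finite_induct)
  case (insert x F)
  then show ?case using dist0_add[of "f x" "sum f F"] by simp
qed auto

lemma dist0_nat_scale: "dist 0 (real k *\<^sub>R (a::'a)) \<le> real k * dist 0 a"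
proof (induction k)
  case (Suc k)
  have "real (Suc k) *\<^sub>R a = a + real k *\<^sub>R a" by (simp add: algebra_simps)
  then show ?case using dist0_add[of a "real k *\<^sub>R a"] Suc by (simp add: algebra_simps)
qed simp

lemma cont_add_a: "continuous_on A f \<Longrightarrow> continuous_on A g \<Longrightarrow> continuous_on A (\<lambda>x. f x + g x :: 'a)"
proof -
  assume f: "continuous_on A f" and g: "continuous_on A g"
  have "continuous_on UNIV (\<lambda>q::'a \<times> 'a. fst q + snd q)" using fr by (simp add: frechet_space_def)
  then show ?thesis
    using continuous_on_compose2[of UNIV "\<lambda>q::'a \<times> 'a. fst q + snd q" A "\<lambda>x. (f x, g x)"]
      continuous_on_Pair[OF f g] by simp
qed

lemma cont_scale_a: "continuous_on A f \<Longrightarrow> continuous_on A g \<Longrightarrow> continuous_on A (\<lambda>x. f x *\<^sub>R g x :: 'a)"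
proof -
  assume f: "continuous_on A f" and g: "continuous_on A g"
  have "continuous_on UNIV (\<lambda>q::real \<times> 'a. fst q *\<^sub>R snd q)" using fr by (simp add: frechet_space_def)
  then show ?thesis
    using continuous_on_compose2[of UNIV "\<lambda>q::real \<times> 'a. fst q *\<^sub>R snd q" A "\<lambda>x. (f x, g x)"]
      continuous_on_Pair[OF f g] by simp
qed

lemma cont_sum_a: "(\<And>i. i \<in> I \<Longrightarrow> continuous_on A (f i)) \<Longrightarrow> continuous_on A (\<lambda>x. \<Sum>i\<in>I. f i x :: 'a)"
proof (induction I rule: infinite_finite_induct)
  case (insert x F)
  then show ?case by (simp add: cont_add_a)
qed auto

lemma scale_at0: "e > 0 \<Longrightarrow> \<exists>d>0. \<forall>(l::real) (z::'a). \<bar>l\<bar> < d \<and> dist 0 z < d \<longrightarrow> dist 0 (l *\<^sub>R z) < e"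
proof -
  assume e: "e > 0"
  have "continuous_on UNIV (\<lambda>q::real \<times> 'a. fst q *\<^sub>R snd q)" using fr by (simp add: frechet_space_def)
  then have "isCont (\<lambda>q::real \<times> 'a. fst q *\<^sub>R snd q) (0,0)" by (simp add: continuous_on_eq_continuous_at)
  then have "\<forall>\<epsilon>>0. \<exists>\<delta>>0. \<forall>q::real\<times>'a. dist q (0,0) < \<delta> \<longrightarrow> dist (fst q *\<^sub>R snd q) 0 < \<epsilon>"
    unfolding continuous_at_eps_delta by simp
  then obtain d where d: "d > 0" "\<forall>q::real\<times>'a. dist q (0,0) < d \<longrightarrow> dist (fst q *\<^sub>R snd q) 0 < e"
    using e by blast
  show ?thesis
  proof (intro exI[of _ "d/2"] conjI allI impI)
    fix l :: real and z :: 'a assume h: "\<bar>l\<bar> < d/2 \<and> dist 0 z < d/2"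
    have "dist (l, z) (0,0) \<le> dist l 0 + dist z 0"
      using sqrt_sum_squares_le_sum_abs[of "dist l 0" "dist z 0"] by (simp add: dist_Pair_Pair)
    also have "\<dots> < d" using h by (simp add: dist_commute dist_real_def)
    finally show "dist 0 (l *\<^sub>R z) < e" using d by (simp add: dist_commute)
  qed (use d in auto)
qed

lemma scale_const_at0: "e > 0 \<Longrightarrow> \<exists>d>0. \<forall>l::real. \<bar>l\<bar> < d \<longrightarrow> dist 0 (l *\<^sub>R (b::'a)) < e"
proof -
  assume e: "e > 0"
  have "continuous_on UNIV (\<lambda>l::real. l *\<^sub>R b)" by (intro cont_scale_a continuous_intros)
  then have "isCont (\<lambda>l::real. l *\<^sub>R b) 0" by (simp add: continuous_on_eq_continuous_at)
  then obtain d where d: "d > 0" "\<forall>l. dist l 0 < d \<longrightarrow> dist (l *\<^sub>R b) (0 *\<^sub>R b) < e"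
    using e unfolding continuous_at_eps_delta by force
  then show ?thesis by (auto simp: dist_commute dist_real_def)
qed

lemma cont_Lm: "continuous_on A f \<Longrightarrow> continuous_on A (\<lambda>z. Lm m (b::nat\<Rightarrow>'a) (f z))"
proof -
  assume cf: "continuous_on A f"
  have c: "continuous_on A (\<lambda>x. f x i)" for i using continuous_on_product_then_coordinatewise[OF cf] .
  show ?thesis unfolding Lm_def
    by (intro cont_sum_a cont_scale_a c continuous_on_const)
qed

lemma E2: "e > 0 \<Longrightarrow> \<exists>r>0. \<forall>x. nrm m x \<le> r \<longrightarrow> dist 0 (Lm m (b::nat\<Rightarrow>'a) x) \<le> e"
proof -
  assume e: "e > 0"
  have "\<forall>i<m. \<exists>d>0. \<forall>l::real. \<bar>l\<bar> < d \<longrightarrow> dist 0 (l *\<^sub>R b i) < e / (m+1)"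
    using scale_const_at0 e by simp
  then obtain dd where dd: "\<forall>i<m. dd i > 0 \<and> (\<forall>l::real. \<bar>l\<bar> < dd i \<longrightarrow> dist 0 (l *\<^sub>R b i) < e / (m+1))"
    by metis
  define r where "r = Min (insert 1 (dd ` {..<m})) / 2"
  have Mpos: "Min (insert 1 (dd ` {..<m})) > 0" using dd by (simp add: Min_gr_iff)
  have r: "r > 0" using Mpos by (simp add: r_def)
  have rl: "i < m \<Longrightarrow> r < dd i" for i
  proof -
    assume i: "i < m"
    have "Min (insert 1 (dd ` {..<m})) \<le> dd i" using i by (intro Min_le) auto
    moreover have "dd i > 0" using dd i by blast
    ultimately show ?thesis using Mpos unfolding r_def by linarith
  qed
  show ?thesis
  proof (intro exI conjI allI impI)
    fix x assume x: "nrm m x \<le> r"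
    have "dist 0 (Lm m b x) \<le> (\<Sum>i<m. dist 0 (x i *\<^sub>R b i))"
      unfolding Lm_def by (rule dist0_sum)
    also have "\<dots> \<le> (\<Sum>i<m. e / (m+1))"
    proof (rule sum_mono)
      fix i assume i: "i \<in> {..<m}"
      have "\<bar>x i\<bar> < dd i" using coord_le_nrm[of i m x] x rl[of i] i by simp
      then show "dist 0 (x i *\<^sub>R b i) \<le> e / (m+1)" using dd i by (simp add: less_imp_le)
    qed
    also have "\<dots> \<le> e" using e by (simp add: field_simps)
    finally show "dist 0 (Lm m b x) \<le> e" .
  qed (rule r)
qed

lemma claimC:
  assumes indep: "\<forall>x\<in>Ev m. Lm m (b::nat\<Rightarrow>'a) x = 0 \<longrightarrow> x = (\<lambda>i. 0)"
    and rho: "\<rho> > 0"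
  shows "\<exists>\<delta>>0. \<forall>x\<in>Ev m. dist 0 (Lm m b x) < \<delta> \<longrightarrow> nrm m x < \<rho>"
proof (cases "m = 0")
  case True then show ?thesis using rho by (intro exI[of _ 1]) (simp add: nrm_def)
next
  case False
  define S1 where "S1 = {x\<in>Ev m. nrm m x = 1}"
  have "(\<Sum>i<m. (if i = 0 then 1 else (0::real))^2) = (\<Sum>i<m. if i = 0 then 1 else 0)"
    by (intro sum.cong) auto
  also have "\<dots> = 1" using False by simp
  finally have ne: "(\<lambda>i. if i = 0 then 1 else 0) \<in> S1"
    using False by (simp add: S1_def Ev_def nrm_def)
  have "continuous_on S1 (\<lambda>x. dist 0 (Lm m b x))"
    by (intro continuous_on_dist continuous_intros cont_Lm)
  then obtain x0 where x0: "x0 \<in> S1" "\<forall>y\<in>S1. dist 0 (Lm m b x0) \<le> dist 0 (Lm m b y)"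
    using continuous_attains_inf[of S1] compact_nrm_eq ne unfolding S1_def by blast
  define \<eta> where "\<eta> = dist 0 (Lm m b x0)"
  have "x0 \<noteq> (\<lambda>i. 0)" using x0 by (auto simp: S1_def nrm_def)
  then have eta: "\<eta> > 0" using indep x0 by (auto simp: \<eta>_def S1_def)
  obtain d where d: "d > 0" "\<forall>(l::real) (z::'a). \<bar>l\<bar> < d \<and> dist 0 z < d \<longrightarrow> dist 0 (l *\<^sub>R z) < \<eta>"
    using scale_at0[OF eta] by blast
  have bound: "nrm m x < 2 / d" if x: "x \<in> Ev m" "dist 0 (Lm m b x) < d" for x
  proof (rule ccontr)
    assume "\<not> ?thesis"
    then have big: "nrm m x \<ge> 2 / d" by simp
    then have np: "nrm m x > 0" using d by (smt (verit) divide_pos_pos)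
    define l where "l = 1 / nrm m x"
    have "l \<le> d / 2" using big np d unfolding l_def by (simp add: field_simps)
    then have l: "\<bar>l\<bar> < d" using np d by (simp add: l_def)
    have lpos: "l > 0" using np by (simp add: l_def)
    have nl: "nrm m (\<lambda>i. l * x i) = 1" using nrm_scale[of m l x] np lpos by (simp add: l_def)
    have "(\<lambda>i. l * x i) \<in> S1" using x nl by (simp add: S1_def Ev_def)
    then have "\<eta> \<le> dist 0 (Lm m b (\<lambda>i. l * x i))" using x0 by (simp add: \<eta>_def)
    also have "\<dots> = dist 0 (l *\<^sub>R Lm m b x)" by (simp add: Lm_scale)
    also have "\<dots> < \<eta>" using d l x by blast
    finally show False by simp
  qed
  obtain k :: nat where k: "real k > 2 / (d * \<rho>)" using reals_Archimedean2 by blast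
  have kpos: "real k > 0" using k d rho by (smt (verit) divide_pos_pos mult_pos_pos)
  show ?thesis
  proof (intro exI[of _ "d / k"] conjI ballI impI)
    show "d / k > 0" using d kpos by simp
    fix x assume x: "x \<in> Ev m" "dist 0 (Lm m b x) < d / k"
    have "dist 0 (Lm m b (\<lambda>i. real k * x i)) = dist 0 (real k *\<^sub>R Lm m b x)" by (simp add: Lm_scale)
    also have "\<dots> \<le> real k * dist 0 (Lm m b x)" by (rule dist0_nat_scale)
    also have "\<dots> < d" using x kpos by (simp add: field_simps)
    finally have "nrm m (\<lambda>i. real k * x i) < 2 / d" using x by (intro bound) (auto simp: Ev_def)
    then have "real k * nrm m x < 2 / d" by (simp add: nrm_scale)
    then have "nrm m x < 2 / (d * k)" using kpos d by (simp add: field_simps)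
    also have "\<dots> < \<rho>" using k kpos d rho by (simp add: field_simps)
    finally show "nrm m x < \<rho>" .
  qed
qed

end

definition runc :: "(('a, 'p) family \<times> ('x \<Rightarrow> 'p) \<times> real) list \<Rightarrow> 'x \<Rightarrow> 'a \<Rightarrow> 'a option" where
  "runc zs x y = comp_lsg (map (\<lambda>(F,q,s). (\<lambda>\<tau> z. fst F \<tau> z (q x), s)) zs) y"

lemma runc_Nil[simp]: "runc [] x y = Some y" by (simp add: runc_def)
lemma runc_Cons: "runc ((F,q,s) # zs) x y =
   (case fst F s y (q x) of None \<Rightarrow> None | Some w \<Rightarrow> runc zs x w)"
  by (cases "fst F s y (q x)") (simp_all add: runc_def)

lemma runc_cont:
  fixes zs :: "(('a::metric_space,'p::metric_space) family \<times> ('x::topological_space \<Rightarrow> 'p) \<times> real) list"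
  assumes "\<forall>(F,q,s)\<in>set zs. is_family F \<and> s > 0 \<and> continuous_on K q \<and> q ` K \<subseteq> snd F"
    and "x0 \<in> K" "runc zs x0 y0 = Some w0" "\<epsilon> > 0"
  shows "\<exists>U \<eta>. open U \<and> x0 \<in> U \<and> \<eta> > 0 \<and> (\<forall>x\<in>U\<inter>K. \<forall>y. dist y y0 < \<eta> \<longrightarrow>
            (\<exists>w. runc zs x y = Some w \<and> dist w w0 < \<epsilon>))"
  using assms
proof (induction zs arbitrary: y0 w0 \<epsilon>)
  case Nil
  then show ?case by (intro exI[of _ UNIV] exI[of _ \<epsilon>]) auto
next
  case (Cons z zs)
  obtain Phi Z q s where z: "z = ((Phi, Z), q, s)" by (metis prod.exhaust)
  have fam: "is_family (Phi, Z)" and s: "s > 0" and cq: "continuous_on K q" and qK: "q ` K \<subseteq> Z"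
    using Cons.prems(1) z by auto
  from Cons.prems(3) z obtain y1 where y1: "Phi s y0 (q x0) = Some y1" "runc zs x0 y1 = Some w0"
    by (auto simp: runc_Cons split: option.splits)
  obtain U1 \<eta>1 where U1: "open U1" "x0 \<in> U1" "\<eta>1 > 0"
    "\<forall>x\<in>U1\<inter>K. \<forall>y. dist y y1 < \<eta>1 \<longrightarrow> (\<exists>w. runc zs x y = Some w \<and> dist w w0 < \<epsilon>)"
    using Cons.IH[of y1 w0 \<epsilon>] Cons.prems y1 by auto
  have qx0: "q x0 \<in> Z" using qK Cons.prems(2) by auto
  have fam3: "\<forall>u. \<forall>p\<in>Z. \<forall>t\<ge>0. \<forall>w. Phi t u p = Some w \<longrightarrow>
           (\<forall>e>0. \<exists>\<delta>>0. \<forall>t'\<ge>0. \<forall>u'. \<forall>p'\<in>Z.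
              \<bar>t - t'\<bar> + dist u u' + dist p p' < \<delta> \<longrightarrow>
              (\<exists>w'. Phi t' u' p' = Some w' \<and> dist w w' < e))"
    using fam unfolding is_family_def by simp
  obtain \<delta> where \<delta>: "\<delta> > 0" "\<forall>t'\<ge>0. \<forall>u'. \<forall>p'\<in>Z.
              \<bar>s - t'\<bar> + dist y0 u' + dist (q x0) p' < \<delta> \<longrightarrow>
              (\<exists>w'. Phi t' u' p' = Some w' \<and> dist y1 w' < \<eta>1)"
    using fam3[rule_format, OF qx0 less_imp_le[OF s] y1(1) U1(3)] by blast
  obtain A where A: "open A" "x0 \<in> A" "\<forall>x\<in>K. x \<in> A \<longrightarrow> q x \<in> ball (q x0) (\<delta>/2)"
    using cq Cons.prems(2) \<delta>(1) unfolding continuous_on_topological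
    by (metis centre_in_ball half_gt_zero open_ball)
  show ?case
  proof (intro exI[of _ "U1 \<inter> A"] exI[of _ "\<delta>/2"] conjI ballI allI impI)
    fix x y assume x: "x \<in> U1 \<inter> A \<inter> K" and y: "dist y y0 < \<delta>/2"
    have "q x \<in> Z" using qK x by auto
    moreover have "\<bar>s - s\<bar> + dist y0 y + dist (q x0) (q x) < \<delta>"
    proof -
      from A(3) x have "q x \<in> ball (q x0) (\<delta>/2)" by blast
      then have qd: "dist (q x0) (q x) < \<delta>/2" by simp
      have yd: "dist y0 y < \<delta>/2" using y by (simp add: dist_commute)
      show ?thesis using qd yd by simp
    qed
    ultimately have "\<exists>w'. Phi s y (q x) = Some w' \<and> dist y1 w' < \<eta>1"
      using \<delta>(2) s by (meson less_imp_le)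
    then obtain w' where w': "Phi s y (q x) = Some w'" "dist y1 w' < \<eta>1" by blast
    have xU1: "x \<in> U1 \<inter> K" using x by blast
    have "dist w' y1 < \<eta>1" using w'(2) by (simp add: dist_commute)
    then obtain w where "runc zs x w' = Some w" "dist w w0 < \<epsilon>"
      using U1(4) xU1 by blast
    then show "\<exists>w. runc (z # zs) x y = Some w \<and> dist w w0 < \<epsilon>"
      using w' z by (simp add: runc_Cons)
  qed (use U1 A \<delta> in auto)
qed

lemma runc_contin:
  fixes zs :: "(('a::metric_space,'p::metric_space) family \<times> ('x::topological_space \<Rightarrow> 'p) \<times> real) list"
  assumes "\<forall>(F,q,s)\<in>set zs. is_family F \<and> s > 0 \<and> continuous_on K q \<and> q ` K \<subseteq> snd F"
    and "\<forall>x\<in>K. runc zs x y0 \<noteq> None"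
  shows "continuous_on K (\<lambda>x. the (runc zs x y0))"
  unfolding continuous_on_topological
proof (intro ballI allI impI)
  fix x0 B assume x0: "x0 \<in> K" and B: "open B" "the (runc zs x0 y0) \<in> B"
  obtain w0 where w0: "runc zs x0 y0 = Some w0" using assms(2) x0 by auto
  obtain \<epsilon> where \<epsilon>: "\<epsilon> > 0" "ball w0 \<epsilon> \<subseteq> B" using B w0 open_contains_ball by force
  obtain U \<eta> where U: "open U" "x0 \<in> U" "\<eta> > 0" "\<forall>x\<in>U\<inter>K. \<forall>y. dist y y0 < \<eta> \<longrightarrow>
            (\<exists>w. runc zs x y = Some w \<and> dist w w0 < \<epsilon>)"
    using runc_cont[OF assms(1) x0 w0 \<epsilon>(1)] by blast
  show "\<exists>A. open A \<and> x0 \<in> A \<and> (\<forall>y\<in>K. y \<in> A \<longrightarrow> the (runc zs y y0) \<in> B)"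
  proof (intro exI[of _ U] conjI ballI impI)
    fix x assume "x \<in> K" "x \<in> U"
    then obtain w where "runc zs x y0 = Some w" "dist w w0 < \<epsilon>" using U by force
    then show "the (runc zs x y0) \<in> B" using \<epsilon> by (auto simp: dist_commute)
  qed (use U in auto)
qed

lemma runc_unif:
  fixes zs :: "(('a::metric_space,'p::metric_space) family \<times> ('x::topological_space \<Rightarrow> 'p) \<times> real) list"
  assumes zs: "\<forall>(F,q,s)\<in>set zs. is_family F \<and> s > 0 \<and> continuous_on K q \<and> q ` K \<subseteq> snd F"
    and K: "compact K" and def: "\<forall>x\<in>K. runc zs x y0 \<noteq> None" and \<epsilon>: "\<epsilon> > 0"
  shows "\<exists>\<eta>>0. \<forall>x\<in>K. \<forall>y. dist y y0 < \<eta> \<longrightarrow>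
     (\<exists>w w'. runc zs x y = Some w \<and> runc zs x y0 = Some w' \<and> dist w w' < \<epsilon>)"
proof (cases "K = {}")
  case True then show ?thesis by (intro exI[of _ 1]) auto
next
  case False
  have "\<forall>x0\<in>K. \<exists>U \<eta>. open U \<and> x0 \<in> U \<and> \<eta> > 0 \<and> (\<forall>x\<in>U\<inter>K. \<forall>y. dist y y0 < \<eta> \<longrightarrow>
            (\<exists>w. runc zs x y = Some w \<and> dist w (the (runc zs x0 y0)) < \<epsilon>/2))"
  proof
    fix x0 assume x0: "x0 \<in> K"
    then obtain w0 where w0: "runc zs x0 y0 = Some w0" using def by auto
    show "\<exists>U \<eta>. open U \<and> x0 \<in> U \<and> \<eta> > 0 \<and> (\<forall>x\<in>U\<inter>K. \<forall>y. dist y y0 < \<eta> \<longrightarrow>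
            (\<exists>w. runc zs x y = Some w \<and> dist w (the (runc zs x0 y0)) < \<epsilon>/2))"
      using runc_cont[OF zs x0 w0, of "\<epsilon>/2"] \<epsilon> w0 by simp
  qed
  then obtain U \<eta> where U: "\<forall>x0\<in>K. open (U x0) \<and> x0 \<in> U x0 \<and> \<eta> x0 > 0 \<and> (\<forall>x\<in>U x0\<inter>K. \<forall>y. dist y y0 < \<eta> x0 \<longrightarrow>
            (\<exists>w. runc zs x y = Some w \<and> dist w (the (runc zs x0 y0)) < \<epsilon>/2))"
    by metis
  obtain T where T: "T \<subseteq> K" "finite T" "K \<subseteq> (\<Union>c\<in>T. U c)"
    using compactE_image[OF K, of K U] U by blast
  have Tne: "T \<noteq> {}" using T False by auto
  define \<eta>0 where "\<eta>0 = Min (\<eta> ` T)"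
  have \<eta>0: "\<eta>0 > 0" using T Tne U by (auto simp: \<eta>0_def Min_gr_iff)
  show ?thesis
  proof (intro exI[of _ \<eta>0] conjI ballI allI impI)
    fix x y assume x: "x \<in> K" and y: "dist y y0 < \<eta>0"
    obtain c where c: "c \<in> T" "x \<in> U c" using T x by auto
    have "\<eta>0 \<le> \<eta> c" using c T by (simp add: \<eta>0_def)
    have Uc: "\<forall>x\<in>U c\<inter>K. \<forall>y. dist y y0 < \<eta> c \<longrightarrow>
            (\<exists>w. runc zs x y = Some w \<and> dist w (the (runc zs c y0)) < \<epsilon>/2)" and \<eta>c: "\<eta> c > 0"
      using U c T by blast+
    have xUc: "x \<in> U c \<inter> K" using c x by blast
    have "dist y y0 < \<eta> c" using y \<open>\<eta>0 \<le> \<eta> c\<close> by linarith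
    then obtain w where w: "runc zs x y = Some w" "dist w (the (runc zs c y0)) < \<epsilon>/2"
      using Uc xUc by blast
    have "dist y0 y0 < \<eta> c" using \<eta>c by simp
    then obtain w' where w': "runc zs x y0 = Some w'" "dist w' (the (runc zs c y0)) < \<epsilon>/2"
      using Uc xUc by blast
    have "dist w w' < \<epsilon>" using w(2) w'(2) dist_triangle2[of w w' "the (runc zs c y0)"] by simp
    then show "\<exists>w w'. runc zs x y = Some w \<and> runc zs x y0 = Some w' \<and> dist w w' < \<epsilon>"
      using w w' by blast
  qed (rule \<eta>0)
qed

lemma comp_lsg_append: "comp_lsg (xs @ ys) u = (case comp_lsg xs u of None \<Rightarrow> None | Some w \<Rightarrow> comp_lsg ys w)"
  by (induction xs arbitrary: u) (auto split: option.splits)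

lemma basis_exists:
  fixes B :: "'a::{real_vector,complete_space} set"
  assumes "finite B"
  shows "\<exists>m b. span B = range (Lm m b) \<and> (\<forall>x\<in>Ev m. Lm m b x = 0 \<longrightarrow> x = (\<lambda>i. 0))"
proof -
  obtain B0 where B0: "B0 \<subseteq> B" "independent B0" "B \<subseteq> span B0"
    using real_vector.maximal_independent_subset[of B] by blast
  have fin: "finite B0" using B0 assms finite_subset by blast
  have s1: "span B0 \<subseteq> span B" using B0(1) by (rule real_vector.span_mono)
  have "span B \<subseteq> span (span B0)" using B0(3) by (rule real_vector.span_mono)
  then have s2: "span B \<subseteq> span B0" by (simp add: real_vector.span_span)
  have spaneq: "span B0 = span B" using s1 s2 by blast
  define m where "m = card B0"
  obtain b where b: "bij_betw b {0..<m} B0" using ex_bij_betw_nat_finite[OF fin] m_def by blast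
  have bl: "bij_betw b {..<m} B0" using b by (simp add: atLeast0LessThan)
  have rng: "span B0 = range (Lm m b)"
  proof
    show "span B0 \<subseteq> range (Lm m b)"
    proof
      fix w assume "w \<in> span B0"
      then obtain u where u: "w = (\<Sum>v\<in>B0. u v *\<^sub>R v)"
        using real_vector.span_finite[OF fin] by auto
      have "(\<Sum>v\<in>B0. u v *\<^sub>R v) = (\<Sum>i<m. u (b i) *\<^sub>R b i)"
        using sum.reindex_bij_betw[OF bl, of "\<lambda>v. u v *\<^sub>R v"] by simp
      also have "\<dots> = Lm m b (\<lambda>i. u (b i))" by (simp add: Lm_def)
      finally show "w \<in> range (Lm m b)" using u by auto
    qed
    show "range (Lm m b) \<subseteq> span B0"
    proof
      fix w assume "w \<in> range (Lm m b)"
      then obtain x where "w = (\<Sum>i<m. x i *\<^sub>R b i)" by (auto simp: Lm_def)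
      moreover have "b i \<in> B0" if "i < m" for i using bl that by (auto simp: bij_betw_def)
      moreover have "(\<Sum>i<m. x i *\<^sub>R b i) \<in> span B0"
      proof (rule real_vector.span_sum)
        fix i assume "i \<in> {..<m}"
        then have "b i \<in> B0" using bl by (auto simp: bij_betw_def)
        then show "x i *\<^sub>R b i \<in> span B0"
          by (intro real_vector.span_scale real_vector.span_base)
      qed
      ultimately show "w \<in> span B0" by simp
    qed
  qed
  have ind: "x = (\<lambda>i. 0)" if x: "x \<in> Ev m" "Lm m b x = 0" for x
  proof -
    define u where "u = (\<lambda>v. x (the_inv_into {..<m} b v))"
    have "(\<Sum>v\<in>B0. u v *\<^sub>R v) = (\<Sum>i<m. u (b i) *\<^sub>R b i)"
      using sum.reindex_bij_betw[OF bl, of "\<lambda>v. u v *\<^sub>R v"] by simp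
    also have "\<dots> = (\<Sum>i<m. x i *\<^sub>R b i)"
      using bl by (intro sum.cong) (auto simp: u_def the_inv_into_f_f bij_betw_def)
    also have "\<dots> = 0" using x by (simp add: Lm_def)
    finally have "\<forall>v\<in>B0. u v = 0"
      using B0(2) real_vector.dependent_finite[OF fin] by blast
    then have "x i = 0" if "i < m" for i
      using bl that by (metis u_def bij_betw_apply lessThan_iff the_inv_into_f_f bij_betw_def)
    then show ?thesis using x(1) by (auto simp: Ev_def fun_eq_iff) (meson not_le)
  qed
  show ?thesis using rng spaneq ind by (intro exI[of _ m] exI[of _ b]) auto
qed

lemma runc_map: "runc (map (\<lambda>(F,g,s). (F, \<lambda>x. g (h x), s)) xs) x y =
   comp_lsg (map (\<lambda>(F,g,s). (\<lambda>\<tau> z. fst F \<tau> z (g (h x)), s)) xs) y"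
  by (simp add: runc_def case_prod_unfold o_def)

lemma sum_list_snd_map: "sum_list (map snd (map (\<lambda>(F,g,s). (S F g, s)) xs)) = sum_list (map (\<lambda>(F,g,s). s) xs)"
  by (simp add: case_prod_unfold o_def)

theorem theorem3p11:
  fixes FF :: "('a::{real_vector,complete_space}, 'p::metric_space) family set"
    and \<pi> :: "'a \<Rightarrow> 'a"
  assumes frechet: "frechet_space TYPE('a)"
    and FF_sub: "\<forall>F\<in>FF. is_family F"
    and lin: "linear \<pi>"
    and cont: "continuous_on UNIV \<pi>"
    and proj: "\<forall>x. \<pi> (\<pi> x) = \<pi> x"
    and findim: "\<exists>B. finite B \<and> range \<pi> = span B"
    and approx: "\<forall>u. \<forall>t>0. closure (attainable (DD FF) u t) = UNIV"
    and hyp2: "\<forall>v. \<forall>e>0. \<forall>e'>0. \<forall>t>0. \<exists>u0 xs.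
        xs \<noteq> [] \<and>
        (\<forall>(F, g, s) \<in> set xs. F \<in> FF \<and> s > 0 \<and>
            continuous_on (Bpi \<pi> v e) g \<and> g ` Bpi \<pi> v e \<subseteq> snd F) \<and>
        sum_list (map (\<lambda>(F, g, s). s) xs) \<le> t \<and>
        (\<exists>c < e'. \<forall>v' \<in> Bpi \<pi> v e. \<exists>w.
            comp_lsg (map (\<lambda>(F, g, s). (\<lambda>\<tau> x. fst F \<tau> x (g v'), s)) xs) u0 = Some w \<and>
            dist w v' \<le> c)"
  shows "\<forall>u v. \<forall>t>0. \<forall>e>0. \<exists>xs w.
        (\<forall>(S, s) \<in> set xs. S \<in> DD FF \<and> s > 0) \<and>
        sum_list (map snd xs) = t \<and>
        comp_lsg xs u = Some w \<and> \<pi> w = \<pi> v \<and> dist w v < e"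
proof (intro allI impI)
  fix u v :: 'a and t e :: real
  assume t: "t > 0" and e: "e > 0"
  obtain B where B: "finite B" "range \<pi> = span B" using findim by blast
  obtain m b where mb: "span B = range (Lm m b)" and indep: "\<forall>x\<in>Ev m. Lm m b x = 0 \<longrightarrow> x = (\<lambda>i. 0)"
    using basis_exists[OF B(1)] by blast
  have rng: "range \<pi> = range (Lm m b)" using B mb by simp
  have pi_diff: "\<pi> (x - y) = \<pi> x - \<pi> y" for x y using lin by (rule linear_diff)
  have pi0: "\<pi> 0 = 0" using lin by (rule linear_0)
  have piL: "\<pi> (Lm m b x) = Lm m b x" for x
  proof -
    obtain y where "Lm m b x = \<pi> y" using rng by (metis rangeE rangeI)
    then show ?thesis using proj by simp
  qed
  have LinR: "Lm m b x \<in> range \<pi>" for x using rng by auto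
  have Lm_trunc: "Lm m b x = Lm m b (\<lambda>i. if i < m then x i else 0)" for x
    by (simp add: Lm_def)
  have rep: "\<exists>x\<in>Ev m. Lm m b x = w" if wr: "w \<in> range \<pi>" for w
  proof -
    obtain x where "w = Lm m b x" using wr rng by auto
    then show ?thesis using Lm_trunc[of x] by (intro bexI[of _ "\<lambda>i. if i < m then x i else 0"]) (auto simp: Ev_def)
  qed
  define coord where "coord w = (SOME x. x \<in> Ev m \<and> Lm m b x = w)" for w
  have coord_spec: "coord w \<in> Ev m \<and> Lm m b (coord w) = w" if "w \<in> range \<pi>" for w
  proof -
    have "\<exists>x. x \<in> Ev m \<and> Lm m b x = w" using rep[OF that] by blast
    then show ?thesis unfolding coord_def by (rule someI_ex)
  qed
  have coord_uniq: "coord w = x" if "x \<in> Ev m" "Lm m b x = w" for x w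
  proof -
    have w: "w \<in> range \<pi>" using that LinR by auto
    have "(\<lambda>i. coord w i - x i) \<in> Ev m" using coord_spec[OF w] that by (simp add: Ev_def)
    moreover have "Lm m b (\<lambda>i. coord w i - x i) = 0" using coord_spec[OF w] that by (simp add: Lm_diff)
    ultimately have "(\<lambda>i. coord w i - x i) = (\<lambda>i. 0)" using indep by blast
    then show ?thesis by (simp add: fun_eq_iff)
  qed
  show "\<exists>xs w. (\<forall>(S, s) \<in> set xs. S \<in> DD FF \<and> s > 0) \<and> sum_list (map snd xs) = t \<and>
        comp_lsg xs u = Some w \<and> \<pi> w = \<pi> v \<and> dist w v < e"
  proof (cases "m = 0")
    case True
    have pz: "\<pi> w = 0" for w
    proof -
      have "\<pi> w \<in> range (Lm m b)" using rng by auto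
      then show ?thesis using True by (auto simp: Lm_def)
    qed
    have "v \<in> closure (attainable (DD FF) u t)" using approx t by auto
    then obtain w where w: "w \<in> attainable (DD FF) u t" "dist w v < e"
      using e closure_approachable by blast
    then obtain xs where xs: "(\<forall>(S, s) \<in> set xs. S \<in> DD FF \<and> s > 0)" "sum_list (map snd xs) = t" "comp_lsg xs u = Some w"
      unfolding attainable_def by blast
    show ?thesis using xs w(2) pz[of w] pz[of v] by (intro exI[of _ xs] exI[of _ w]) simp
  next
    case False
    then have m: "m > 0" by simp
    have e2: "e/2 > 0" and t2: "t/2 > 0" using e t by auto
    obtain r where r: "r > 0" "\<forall>x. nrm m x \<le> r \<longrightarrow> dist 0 (Lm m b x) \<le> e/2"
      using E2[OF frechet e2, of m b] by blast
    obtain \<delta>1 where \<delta>1: "\<delta>1 > 0" "\<forall>x\<in>Ev m. dist 0 (Lm m b x) < \<delta>1 \<longrightarrow> nrm m x < r"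
      using claimC[OF frechet indep r(1)] by blast
    have "isCont \<pi> 0" using cont by (simp add: continuous_on_eq_continuous_at)
    then obtain \<delta>2 where \<delta>2: "\<delta>2 > 0" "\<forall>z. dist z 0 < \<delta>2 \<longrightarrow> dist (\<pi> z) (\<pi> 0) < \<delta>1"
      using \<delta>1(1) unfolding continuous_at_eps_delta by blast
    define \<epsilon>' where "\<epsilon>' = min \<delta>2 (e/2) / 2"
    have \<epsilon>': "\<epsilon>' > 0" "\<epsilon>' < \<delta>2" "\<epsilon>' \<le> e/4" using \<delta>2 e by (auto simp: \<epsilon>'_def)
    obtain u0 xs c where xs: "\<forall>(F, g, s) \<in> set xs. F \<in> FF \<and> s > 0 \<and>
            continuous_on (Bpi \<pi> v (e/2)) g \<and> g ` Bpi \<pi> v (e/2) \<subseteq> snd F"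
        "sum_list (map (\<lambda>(F, g, s). s) xs) \<le> t/2"
      and c: "c < \<epsilon>'" "\<forall>v' \<in> Bpi \<pi> v (e/2). \<exists>w.
            comp_lsg (map (\<lambda>(F, g, s). (\<lambda>\<tau> x. fst F \<tau> x (g v'), s)) xs) u0 = Some w \<and>
            dist w v' \<le> c"
      using hyp2[THEN spec[of _ v], rule_format, OF e2 \<epsilon>'(1) t2] by blast
    define K where "K = {x\<in>Ev m. nrm m x \<le> r}"
    define vx where "vx x = v + Lm m b x" for x
    have vxB: "vx x \<in> Bpi \<pi> v (e/2)" if "x \<in> K" for x
      using that r(2) LinR unfolding Bpi_def vx_def K_def by blast
    have cvx: "continuous_on K vx"
      unfolding vx_def by (intro cont_add_a[OF frechet] continuous_intros cont_Lm[OF frechet])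
    define zs where "zs = map (\<lambda>(F,g,s). (F, \<lambda>x. g (vx x), s)) xs"
    have zs_prop: "\<forall>(F,q,s)\<in>set zs. is_family F \<and> s > 0 \<and> continuous_on K q \<and> q ` K \<subseteq> snd F"
      unfolding zs_def
    proof
      fix z assume "z \<in> set (map (\<lambda>(F,g,s). (F, \<lambda>x. g (vx x), s)) xs)"
      then obtain F g s where z: "z = (F, \<lambda>x. g (vx x), s)" and Fgs: "(F,g,s) \<in> set xs" by auto
      have h: "F \<in> FF" "s > 0" "continuous_on (Bpi \<pi> v (e/2)) g" "g ` Bpi \<pi> v (e/2) \<subseteq> snd F"
        using bspec[OF xs(1) Fgs] by simp_all
      have i1: "is_family F" using h(1) FF_sub by blast
      have i2: "continuous_on K (\<lambda>x. g (vx x))"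
        using continuous_on_compose2[OF h(3) cvx] vxB by blast
      have i3: "(\<lambda>x. g (vx x)) ` K \<subseteq> snd F" using h(4) vxB by blast
      show "case z of (F, q, s) \<Rightarrow> is_family F \<and> s > 0 \<and> continuous_on K q \<and> q ` K \<subseteq> snd F"
        using z i1 h(2) i2 i3 by simp
    qed
    have runc_eq: "runc zs x y = comp_lsg (map (\<lambda>(F,g,s). (\<lambda>\<tau> z. fst F \<tau> z (g (vx x)), s)) xs) y" for x y
      by (simp add: zs_def runc_map)
    have def0: "\<forall>x\<in>K. runc zs x u0 \<noteq> None" using c(2) vxB runc_eq by fastforce
    have cK: "compact K" unfolding K_def by (rule compact_nrm_le)
    obtain \<eta> where \<eta>: "\<eta> > 0" "\<forall>x\<in>K. \<forall>y. dist y u0 < \<eta> \<longrightarrow>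
     (\<exists>w w'. runc zs x y = Some w \<and> runc zs x u0 = Some w' \<and> dist w w' < \<epsilon>' - c)"
      using runc_unif[OF zs_prop cK def0, of "\<epsilon>' - c"] c(1) by auto
    define T2 where "T2 = sum_list (map (\<lambda>(F, g, s). s) xs)"
    have T2: "t - T2 > 0" using xs(2) t by (simp add: T2_def)
    have "u0 \<in> closure (attainable (DD FF) u (t - T2))" using approx T2 by auto
    then obtain w1 where w1: "w1 \<in> attainable (DD FF) u (t - T2)" "dist w1 u0 < \<eta>"
      using \<eta>(1) closure_approachable by blast
    then obtain xs1 where xs1: "\<forall>(S, s) \<in> set xs1. S \<in> DD FF \<and> s > 0" "sum_list (map snd xs1) = t - T2"
      "comp_lsg xs1 u = Some w1"
      unfolding attainable_def by blast
    have out_close: "\<exists>w. runc zs x w1 = Some w \<and> dist w (vx x) < \<epsilon>'" if x: "x \<in> K" for x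
    proof -
      obtain w w' where ww: "runc zs x w1 = Some w" "runc zs x u0 = Some w'" "dist w w' < \<epsilon>' - c"
        using \<eta>(2) x w1(2) by blast
      obtain w'' where w'': "comp_lsg (map (\<lambda>(F, g, s). (\<lambda>\<tau> z. fst F \<tau> z (g (vx x)), s)) xs) u0 = Some w''"
        "dist w'' (vx x) \<le> c" using c(2) vxB[OF x] by blast
      have "w' = w''" using ww(2) w''(1) runc_eq by simp
      then have "dist w (vx x) < \<epsilon>'" using ww(3) w''(2) dist_triangle[of w "vx x" w'] by simp
      then show ?thesis using ww(1) by blast
    qed
    define out where "out x = the (runc zs x w1)" for x
    have outK: "runc zs x w1 = Some (out x) \<and> dist (out x) (vx x) < \<epsilon>'" if "x \<in> K" for x
      using out_close[OF that] by (auto simp: out_def)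
    have cout: "continuous_on K out"
      unfolding out_def using runc_contin[OF zs_prop] outK by blast
    define c\<pi> where "c\<pi> z = coord (\<pi> z)" for z
    have c\<pi>_spec: "c\<pi> z \<in> Ev m \<and> Lm m b (c\<pi> z) = \<pi> z" for z
      using coord_spec[of "\<pi> z"] by (simp add: c\<pi>_def)
    have c\<pi>_diff: "c\<pi> (z - z0) = (\<lambda>i. c\<pi> z i - c\<pi> z0 i)" for z z0
    proof -
      have "coord (\<pi> (z - z0)) = (\<lambda>i. c\<pi> z i - c\<pi> z0 i)"
      proof (rule coord_uniq)
        show "(\<lambda>i. c\<pi> z i - c\<pi> z0 i) \<in> Ev m" using c\<pi>_spec[of z] c\<pi>_spec[of z0] by (simp add: Ev_def)
        show "Lm m b (\<lambda>i. c\<pi> z i - c\<pi> z0 i) = \<pi> (z - z0)"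
          using c\<pi>_spec[of z] c\<pi>_spec[of z0] by (simp add: Lm_diff pi_diff)
      qed
      then show ?thesis by (simp add: c\<pi>_def)
    qed
    have cc\<pi>: "continuous_on UNIV c\<pi>"
    proof (rule continuous_on_coordinatewise_then_product)
      fix i
      show "continuous_on UNIV (\<lambda>z. c\<pi> z i)"
        unfolding continuous_on_iff
      proof (intro ballI allI impI)
        fix z0 :: 'a and \<epsilon> :: real assume \<epsilon>: "\<epsilon> > 0"
        obtain \<delta> where \<delta>: "\<delta> > 0" "\<forall>x\<in>Ev m. dist 0 (Lm m b x) < \<delta> \<longrightarrow> nrm m x < \<epsilon>"
          using claimC[OF frechet indep \<epsilon>] by blast
        obtain d where d: "d > 0" "\<forall>z\<in>UNIV. dist z z0 < d \<longrightarrow> dist (\<pi> z) (\<pi> z0) < \<delta>"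
          using cont \<delta>(1) unfolding continuous_on_iff by blast
        show "\<exists>d>0. \<forall>z\<in>UNIV. dist z z0 < d \<longrightarrow> dist (c\<pi> z i) (c\<pi> z0 i) < \<epsilon>"
        proof (intro exI[of _ d] conjI ballI impI)
          fix z assume "dist z z0 < d"
          then have pd: "dist (\<pi> z) (\<pi> z0) < \<delta>" using d by blast
          have "dist 0 (Lm m b (c\<pi> (z - z0))) = dist 0 (\<pi> z - \<pi> z0)" using c\<pi>_spec pi_diff by simp
          also have "\<dots> = dist (\<pi> z0) (\<pi> z)" by (simp add: dist0[OF frechet, of "\<pi> z0" "\<pi> z"])
          finally have "dist 0 (Lm m b (c\<pi> (z - z0))) < \<delta>" using pd by (simp add: dist_commute)
          then have nl: "nrm m (c\<pi> (z - z0)) < \<epsilon>" using \<delta>(2) c\<pi>_spec by blast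
          have "\<bar>c\<pi> z i - c\<pi> z0 i\<bar> \<le> nrm m (c\<pi> (z - z0))"
          proof (cases "i < m")
            case True
            then show ?thesis using coord_le_nrm[OF True, of "c\<pi> (z - z0)"] c\<pi>_diff[of z z0] by simp
          next
            case False
            then show ?thesis using c\<pi>_spec[of z] c\<pi>_spec[of z0] nrm_nonneg[of m] by (simp add: Ev_def)
          qed
          then show "dist (c\<pi> z i) (c\<pi> z0 i) < \<epsilon>" using nl by (simp add: dist_real_def)
        qed (rule d(1))
      qed
    qed
    define sc where "sc y = (\<lambda>j. r * y j)" for y :: "nat \<Rightarrow> real"
    define D1 where "D1 = {y\<in>Ev m. nrm m y \<le> 1}"
    have scK: "sc y \<in> K" if "y \<in> D1" for y
    proof -
      have "nrm m (sc y) = r * nrm m y" using nrm_scale[of m r y] r(1) by (simp add: sc_def)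
      also have "\<dots> \<le> r" using that r(1) by (simp add: D1_def)
      finally show ?thesis using that by (simp add: K_def sc_def Ev_def D1_def)
    qed
    define G where "G y = (\<lambda>i. c\<pi> (out (sc y) - v) i / r)" for y
    have contG: "continuous_on D1 G"
    proof -
      have c1: "continuous_on D1 sc" unfolding sc_def
      proof (rule continuous_on_coordinatewise_then_product)
        fix i show "continuous_on D1 (\<lambda>y. r * y i)"
          by (intro continuous_on_mult continuous_on_const continuous_on_product_then_coordinatewise[OF continuous_on_id])
      qed
      have c2: "continuous_on D1 (\<lambda>y. out (sc y))" using continuous_on_compose2[OF cout c1] scK by blast
      have c3: "continuous_on D1 (\<lambda>y. out (sc y) + (- v))"
        by (rule cont_add_a[OF frechet c2 continuous_on_const])
      have c4: "continuous_on D1 (\<lambda>y. c\<pi> (out (sc y) - v))"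
        using continuous_on_compose2[OF cc\<pi> c3] by simp
      show ?thesis unfolding G_def
      proof (rule continuous_on_coordinatewise_then_product)
        fix i show "continuous_on D1 (\<lambda>y. c\<pi> (out (sc y) - v) i / r)"
          by (rule continuous_on_divide[OF continuous_on_product_then_coordinatewise[OF c4] continuous_on_const]) (use r in simp)
      qed
    qed
    have GE: "G ` D1 \<subseteq> Ev m" using c\<pi>_spec by (auto simp: G_def Ev_def)
    have close: "nrm m (\<lambda>i. G y i - y i) < 1" if y: "y \<in> Ev m" "nrm m y = 1" for y
    proof -
      have yD: "y \<in> D1" using y by (simp add: D1_def)
      define x where "x = sc y"
      have xK: "x \<in> K" using scK yD x_def by simp
      have xE: "x \<in> Ev m" using xK K_def by simp
      define zz where "zz = out x - vx x"
      have zz: "zz = (out x - v) - Lm m b x" by (simp add: zz_def vx_def algebra_simps)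
      have Dv: "c\<pi> zz = (\<lambda>i. c\<pi> (out x - v) i - x i)"
      proof -
        have "coord (\<pi> zz) = (\<lambda>i. c\<pi> (out x - v) i - x i)"
        proof (rule coord_uniq)
          show "(\<lambda>i. c\<pi> (out x - v) i - x i) \<in> Ev m" using c\<pi>_spec[of "out x - v"] xE by (simp add: Ev_def)
          show "Lm m b (\<lambda>i. c\<pi> (out x - v) i - x i) = \<pi> zz"
            using c\<pi>_spec[of "out x - v"] by (simp add: Lm_diff zz pi_diff piL)
        qed
        then show ?thesis by (simp add: c\<pi>_def)
      qed
      have "dist 0 zz = dist (vx x) (out x)" by (simp add: zz_def dist0[OF frechet, of "vx x" "out x"])
      also have "\<dots> < \<epsilon>'" using outK[OF xK] by (simp add: dist_commute)
      finally have "dist zz 0 < \<delta>2" using \<epsilon>' by (simp add: dist_commute)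
      then have "dist (\<pi> zz) (\<pi> 0) < \<delta>1" using \<delta>2(2) by blast
      then have "dist 0 (Lm m b (c\<pi> zz)) < \<delta>1" using c\<pi>_spec[of zz] pi0 by (simp add: dist_commute)
      then have nz: "nrm m (c\<pi> zz) < r" using \<delta>1(2) c\<pi>_spec by blast
      have eq: "(\<lambda>i. G y i - y i) = (\<lambda>i. (1/r) * c\<pi> zz i)"
      proof
        fix i
        have "c\<pi> zz i = c\<pi> (out x - v) i - x i" using Dv by simp
        then show "G y i - y i = (1/r) * c\<pi> zz i" using r(1) by (simp add: G_def x_def sc_def field_simps)
      qed
      have "nrm m (\<lambda>i. G y i - y i) = (1/r) * nrm m (c\<pi> zz)"
        unfolding eq using nrm_scale[of m "1/r" "c\<pi> zz"] r(1) by simp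
      also have "\<dots> < 1" using nz r(1) by (simp add: field_simps)
      finally show ?thesis .
    qed
    obtain y where y: "y \<in> D1" "G y = (\<lambda>i. 0)"
      using zero_lemma[OF m, of G] contG GE close unfolding D1_def by blast
    have x1K: "sc y \<in> K" using scK y(1) by simp
    have c0: "c\<pi> (out (sc y) - v) = (\<lambda>i. 0)"
    proof
      fix i have "c\<pi> (out (sc y) - v) i / r = 0" using fun_cong[OF y(2), of i] by (simp add: G_def)
      then show "c\<pi> (out (sc y) - v) i = 0" using r(1) by simp
    qed
    have "\<pi> (out (sc y) - v) = 0" using c\<pi>_spec[of "out (sc y) - v"] c0 Lm_zero[of m b] by simp
    then have piw: "\<pi> (out (sc y)) = \<pi> v" by (simp add: pi_diff)
    define ys where "ys = map (\<lambda>(F,g,s). (\<lambda>\<tau> z. fst F \<tau> z (g (vx (sc y))), s)) xs"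
    have ysDD: "\<forall>(S,s)\<in>set ys. S \<in> DD FF \<and> s > 0"
      unfolding ys_def
    proof
      fix z assume "z \<in> set (map (\<lambda>(F,g,s). (\<lambda>\<tau> z. fst F \<tau> z (g (vx (sc y))), s)) xs)"
      then obtain F g s where z: "z = (\<lambda>\<tau> z. fst F \<tau> z (g (vx (sc y))), s)" and Fgs: "(F,g,s) \<in> set xs" by auto
      have h: "F \<in> FF" "s > 0" "g ` Bpi \<pi> v (e/2) \<subseteq> snd F"
        using bspec[OF xs(1) Fgs] by simp_all
      have "g (vx (sc y)) \<in> snd F" using h(3) vxB[OF x1K] by blast
      moreover have "(fst F, snd F) \<in> FF" using h(1) by simp
      ultimately have "(\<lambda>\<tau> z. fst F \<tau> z (g (vx (sc y)))) \<in> DD FF"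
        unfolding DD_def by blast
      then show "case z of (S, s) \<Rightarrow> S \<in> DD FF \<and> s > 0" using z h(2) by simp
    qed
    have ys_sum: "sum_list (map snd ys) = T2" by (simp add: ys_def T2_def case_prod_unfold o_def)
    have ys_comp: "comp_lsg ys w1 = Some (out (sc y))" using outK[OF x1K] runc_eq by (simp add: ys_def)
    show ?thesis
    proof (intro exI[of _ "xs1 @ ys"] exI[of _ "out (sc y)"] conjI)
      show "\<forall>(S,s)\<in>set (xs1 @ ys). S \<in> DD FF \<and> s > 0" using xs1(1) ysDD by auto
      show "sum_list (map snd (xs1 @ ys)) = t" using xs1(2) ys_sum by simp
      show "comp_lsg (xs1 @ ys) u = Some (out (sc y))" using xs1(3) ys_comp by (simp add: comp_lsg_append)
      show "\<pi> (out (sc y)) = \<pi> v" by (rule piw)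
      show "dist (out (sc y)) v < e"
      proof -
        have d1: "dist (out (sc y)) (vx (sc y)) < \<epsilon>'" using outK[OF x1K] by simp
        have "dist (vx (sc y)) v = dist 0 (- Lm m b (sc y))"
          by (simp add: vx_def dist0[OF frechet, of "v + Lm m b (sc y)" v])
        also have "\<dots> = dist 0 (Lm m b (sc y))" by (rule dist0_minus[OF frechet])
        also have "\<dots> \<le> e/2" using r(2) x1K by (simp add: K_def)
        finally have d2: "dist (vx (sc y)) v \<le> e/2" .
        have "dist (out (sc y)) v \<le> dist (out (sc y)) (vx (sc y)) + dist (vx (sc y)) v"
          by (rule dist_triangle)
        then show ?thesis using d1 d2 \<epsilon>'(3) e by linarith
      qed
    qed
  qed
qed

end
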